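(* Let $G=(V,E)$ be a graph and let $\mathcal{M}$ be a nontrivial, unbounded graph matroid family with rank function $r$, dimensionality $d$, and threshold $t$. Suppose that $\mathcal{M}$ has the Lovász-Yemini property with constant $c$, i.e. every $c$-connected graph is $\mathcal{M}$-rigid. If $G$ is $(\max(t,c)+k)$-connected for some positive integer $k$, then $\mathcal{M}(G)$ is vertically $(k+1)$-connected.
   Context: All graphs are finite and simple and have no isolated vertices. A graph matroid family $\mathcal{M}$ assigns to every graph $G$ a matroid $\mathcal{M}(G)$ on $E(G)$ such that (i) every graph isomorphism $V(G)\to V(H)$ induces an isomorphism $\mathcal{M}(G)\to\mathcal{M}(H)$, and (ii) for every subgraph $H$ of $G$, $\mathcal{M}(H)$ is the restriction of $\mathcal{M}(G)$ to $E(H)$. $r(G)$ is the rank of $\mathcal{M}(G)$; $G$ is $\mathcal{M}$-rigid if $r(G)=r(K_{V(G)})$. $\mathcal{M}$ is nontrivial if some graph $G$ has $r(G)<|E(G)|$, unbounded if $r(K_n)$ is unbounded. An $\mathcal{M}$-circuit is a graph $C$ with $r(C)<|E(C)|$ and $r(C-e)=|E(C)|-1$ for all edges $e$. Dimensionality $d$: minimum over $\mathcal{M}$-circuits of (minimum degree $-1$); threshold $t$: minimum of $|V(C)|-1$ over $\mathcal{M}$-circuits $C$ of minimum degree $d+1$. For a matroid with rank function $r$ on ground set $E$ and positive integer $k$, a bipartition $(E_1,E_2)$ of $E$ is a vertical $k$-separation if $r(E_1),r(E_2)\ge k$ and $r(E_1)+r(E_2)\le r(E)+k-1$; the matroid is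 vertically $k$-connected if its rank is at least $k$ and it has no vertical $k'$-separation for any positive integer $k'<k$. *)

theory Defs
  imports Main
begin

(* Graphs: finite simple graphs without isolated vertices, represented by their
   edge set; vertices are natural numbers (every finite graph is isomorphic to one
   on nat); the vertex set is the union of the edges. *)

definition is_graph :: "nat set set \<Rightarrow> bool" where
  "is_graph E \<longleftrightarrow> finite E \<and> (\<forall>e\<in>E. card e = 2)"

definition verts :: "nat set set \<Rightarrow> nat set" where
  "verts E = \<Union>E"

definition complete_graph :: "nat set \<Rightarrow> nat set set" where
  "complete_graph V = {e. e \<subseteq> V \<and> card e = 2}"

definition matroid_on :: "'e set \<Rightarrow> ('e set \<Rightarrow> bool) \<Rightarrow> bool" where
  "matroid_on S indep \<longleftrightarrow> finite S \<and>
     (\<forall>X. indep X \<longrightarrow> X \<subseteq> S) \<and> indep {} \<and>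
     (\<forall>X Y. indep Y \<and> X \<subseteq> Y \<longrightarrow> indep X) \<and>
     (\<forall>X Y. indep X \<and> indep Y \<and> card X < card Y \<longrightarrow> (\<exists>y\<in>Y - X. indep (insert y X)))"

definition mrank :: "('e set \<Rightarrow> bool) \<Rightarrow> 'e set \<Rightarrow> nat" where
  "mrank indep X = Max {card Y | Y. Y \<subseteq> X \<and> indep Y}"

(* Graph matroid family: M E is the independence predicate of the matroid M(G)
   on the edge set E of the graph G *)
definition graph_matroid_family :: "(nat set set \<Rightarrow> nat set set \<Rightarrow> bool) \<Rightarrow> bool" where
  "graph_matroid_family M \<longleftrightarrow>
     (\<forall>E. is_graph E \<longrightarrow> matroid_on E (M E)) \<and>
     (\<forall>E f. is_graph E \<and> inj_on f (verts E) \<longrightarrow>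
        (\<forall>X. X \<subseteq> E \<longrightarrow> (M ((`) f ` E) ((`) f ` X) \<longleftrightarrow> M E X))) \<and>
     (\<forall>E H. is_graph E \<and> H \<subseteq> E \<longrightarrow> (\<forall>X. M H X \<longleftrightarrow> X \<subseteq> H \<and> M E X))"

definition grank :: "(nat set set \<Rightarrow> nat set set \<Rightarrow> bool) \<Rightarrow> nat set set \<Rightarrow> nat" where
  "grank M E = mrank (M E) E"

definition rigid :: "(nat set set \<Rightarrow> nat set set \<Rightarrow> bool) \<Rightarrow> nat set set \<Rightarrow> bool" where
  "rigid M E \<longleftrightarrow> grank M E = grank M (complete_graph (verts E))"

definition nontrivial_family :: "(nat set set \<Rightarrow> nat set set \<Rightarrow> bool) \<Rightarrow> bool" where
  "nontrivial_family M \<longleftrightarrow> (\<exists>E. is_graph E \<and> grank M E < card E)"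

definition unbounded_family :: "(nat set set \<Rightarrow> nat set set \<Rightarrow> bool) \<Rightarrow> bool" where
  "unbounded_family M \<longleftrightarrow> (\<forall>b. \<exists>n. grank M (complete_graph {0..<n}) > b)"

definition is_circuit :: "(nat set set \<Rightarrow> nat set set \<Rightarrow> bool) \<Rightarrow> nat set set \<Rightarrow> bool" where
  "is_circuit M C \<longleftrightarrow> is_graph C \<and> grank M C < card C \<and>
     (\<forall>e\<in>C. grank M (C - {e}) = card C - 1)"

definition degree :: "nat set set \<Rightarrow> nat \<Rightarrow> nat" where
  "degree E v = card {e\<in>E. v \<in> e}"

definition min_degree :: "nat set set \<Rightarrow> nat" where
  "min_degree E = Min (degree E ` verts E)"

definition dimensionality :: "(nat set set \<Rightarrow> nat set set \<Rightarrow> bool) \<Rightarrow> nat" where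
  "dimensionality M = (LEAST d. \<exists>C. is_circuit M C \<and> d = min_degree C - 1)"

definition threshold :: "(nat set set \<Rightarrow> nat set set \<Rightarrow> bool) \<Rightarrow> nat" where
  "threshold M = (LEAST t. \<exists>C. is_circuit M C \<and> min_degree C = dimensionality M + 1
                              \<and> t = card (verts C) - 1)"

definition connected_on :: "nat set set \<Rightarrow> nat set \<Rightarrow> bool" where
  "connected_on E W \<longleftrightarrow> W \<noteq> {} \<and>
     (\<forall>u\<in>W. \<forall>v\<in>W. (u, v) \<in> {(x, y). {x, y} \<in> E \<and> x \<in> W \<and> y \<in> W}\<^sup>*)"

definition k_connected :: "nat \<Rightarrow> nat set set \<Rightarrow> bool" where
  "k_connected k E \<longleftrightarrow> card (verts E) > k \<and>
     (\<forall>X. X \<subseteq> verts E \<and> card X < k \<longrightarrow> connected_on E (verts E - X))"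

definition lovasz_yemini :: "(nat set set \<Rightarrow> nat set set \<Rightarrow> bool) \<Rightarrow> nat \<Rightarrow> bool" where
  "lovasz_yemini M c \<longleftrightarrow> (\<forall>E. is_graph E \<and> k_connected c E \<longrightarrow> rigid M E)"

definition vertical_separation :: "('e set \<Rightarrow> bool) \<Rightarrow> 'e set \<Rightarrow> nat \<Rightarrow> 'e set \<Rightarrow> 'e set \<Rightarrow> bool" where
  "vertical_separation indep S k E1 E2 \<longleftrightarrow>
     E1 \<union> E2 = S \<and> E1 \<inter> E2 = {} \<and>
     mrank indep E1 \<ge> k \<and> mrank indep E2 \<ge> k \<and>
     mrank indep E1 + mrank indep E2 \<le> mrank indep S + k - 1"

definition vertically_connected :: "('e set \<Rightarrow> bool) \<Rightarrow> 'e set \<Rightarrow> nat \<Rightarrow> bool" where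
  "vertically_connected indep S k \<longleftrightarrow> mrank indep S \<ge> k \<and>
     (\<forall>k' E1 E2. 0 < k' \<and> k' < k \<longrightarrow> \<not> vertical_separation indep S k' E1 E2)"

end

theory Submission
  imports Defs
begin

locale mat =
  fixes S :: "'e set" and ind :: "'e set \<Rightarrow> bool"
  assumes m: "matroid_on S ind"
begin

lemma finS: "finite S" using m unfolding matroid_on_def by blast
lemma ind_sub: "ind X \<Longrightarrow> X \<subseteq> S" using m unfolding matroid_on_def by blast
lemma ind_empty: "ind {}" using m unfolding matroid_on_def by blast
lemma ind_mono: "ind Y \<Longrightarrow> X \<subseteq> Y \<Longrightarrow> ind X" using m unfolding matroid_on_def by blast
lemma ind_aug: "ind X \<Longrightarrow> ind Y \<Longrightarrow> card X < card Y \<Longrightarrow> \<exists>y\<in>Y - X. ind (insert y X)"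
  using m unfolding matroid_on_def by blast

lemma rset_fin: "X \<subseteq> S \<Longrightarrow> finite {card Y |Y. Y \<subseteq> X \<and> ind Y}"
proof -
  assume X: "X \<subseteq> S"
  have "finite X" using X finS finite_subset by blast
  then have "{card Y |Y. Y \<subseteq> X \<and> ind Y} \<subseteq> {0..card X}"
    using card_mono by fastforce
  then show ?thesis using finite_subset by blast
qed

lemma rank_ge: "X \<subseteq> S \<Longrightarrow> B \<subseteq> X \<Longrightarrow> ind B \<Longrightarrow> card B \<le> mrank ind X"
proof -
  assume a: "X \<subseteq> S" "B \<subseteq> X" "ind B"
  have "card B \<in> {card Y |Y. Y \<subseteq> X \<and> ind Y}" using a by blast
  then show ?thesis unfolding mrank_def using Max_ge[OF rset_fin[OF a(1)]] by blast
qed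

lemma rank_ex: "X \<subseteq> S \<Longrightarrow> \<exists>B\<subseteq>X. ind B \<and> card B = mrank ind X"
proof -
  assume X: "X \<subseteq> S"
  have ne: "{card Y |Y. Y \<subseteq> X \<and> ind Y} \<noteq> {}" using ind_empty by blast
  have "mrank ind X \<in> {card Y |Y. Y \<subseteq> X \<and> ind Y}"
    unfolding mrank_def using Max_in[OF rset_fin[OF X] ne] .
  then show ?thesis by auto
qed

lemma rank_le_card: "X \<subseteq> S \<Longrightarrow> mrank ind X \<le> card X"
proof -
  assume X: "X \<subseteq> S"
  obtain B where "B \<subseteq> X" "ind B" "card B = mrank ind X" using rank_ex[OF X] by blast
  moreover have "finite X" using X finS finite_subset by blast
  ultimately show ?thesis using card_mono[of X B] by simp
qed

lemma rank_mono: "X \<subseteq> Y \<Longrightarrow> Y \<subseteq> S \<Longrightarrow> mrank ind X \<le> mrank ind Y"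
proof -
  assume a: "X \<subseteq> Y" "Y \<subseteq> S"
  have XS: "X \<subseteq> S" using a by blast
  obtain B where "B \<subseteq> X" "ind B" "card B = mrank ind X" using rank_ex[OF XS] by blast
  then show ?thesis using rank_ge[of Y B] a by auto
qed

lemma ind_rank: "ind X \<Longrightarrow> mrank ind X = card X"
proof -
  assume i: "ind X"
  have "card X \<le> mrank ind X" using rank_ge[of X X] i ind_sub by auto
  then show ?thesis using rank_le_card[OF ind_sub[OF i]] by linarith
qed

lemma rank_ind: "X \<subseteq> S \<Longrightarrow> mrank ind X = card X \<Longrightarrow> ind X"
proof -
  assume X: "X \<subseteq> S" and r: "mrank ind X = card X"
  obtain B where B: "B \<subseteq> X" "ind B" "card B = mrank ind X" using rank_ex[OF X] by blast
  have "finite X" using X finS finite_subset by blast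
  then have "B = X" using card_subset_eq[of X B] B r by simp
  then show ?thesis using B by simp
qed

lemma extend_aux: "\<forall>B. B \<subseteq> X \<and> ind B \<and> mrank ind X - card B = n \<longrightarrow>
   (\<exists>B'. B \<subseteq> B' \<and> B' \<subseteq> X \<and> ind B' \<and> card B' = mrank ind X)" if X: "X \<subseteq> S"
proof (induction n)
  case 0
  show ?case
  proof (intro allI impI)
    fix B assume B: "B \<subseteq> X \<and> ind B \<and> mrank ind X - card B = 0"
    have "card B \<le> mrank ind X" using rank_ge[OF X, of B] B by blast
    then have "card B = mrank ind X" using B by linarith
    then show "\<exists>B'. B \<subseteq> B' \<and> B' \<subseteq> X \<and> ind B' \<and> card B' = mrank ind X" using B by blast
  qed
next
  case (Suc n)
  show ?case
  proof (intro allI impI)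
    fix B assume B: "B \<subseteq> X \<and> ind B \<and> mrank ind X - card B = Suc n"
    obtain Bm where Bm: "Bm \<subseteq> X" "ind Bm" "card Bm = mrank ind X" using rank_ex[OF X] by blast
    have "card B < card Bm" using B Bm by linarith
    then obtain y where y: "y \<in> Bm - B" "ind (insert y B)" using ind_aug[of B Bm] B Bm by blast
    have BS: "B \<subseteq> S" using B X by blast
    have fB: "finite B" using finite_subset[OF BS finS] .
    have yB: "y \<notin> B" using y by blast
    have "card (insert y B) = Suc (card B)" using yB fB by simp
    then have h: "insert y B \<subseteq> X \<and> ind (insert y B) \<and> mrank ind X - card (insert y B) = n"
      using B y Bm by auto
    obtain B' where "insert y B \<subseteq> B'" "B' \<subseteq> X" "ind B'" "card B' = mrank ind X"
      using mp[OF spec[OF Suc.IH, of "insert y B"] h] by blast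
    then show "\<exists>B'. B \<subseteq> B' \<and> B' \<subseteq> X \<and> ind B' \<and> card B' = mrank ind X"
      by blast
  qed
qed

lemma extend: "X \<subseteq> S \<Longrightarrow> B \<subseteq> X \<Longrightarrow> ind B \<Longrightarrow>
   \<exists>B'. B \<subseteq> B' \<and> B' \<subseteq> X \<and> ind B' \<and> card B' = mrank ind X"
proof -
  assume a: "X \<subseteq> S" "B \<subseteq> X" "ind B"
  show ?thesis using mp[OF spec[OF extend_aux[OF a(1), of "mrank ind X - card B"], of B]] a by blast
qed

lemma submod: "A \<subseteq> S \<Longrightarrow> B \<subseteq> S \<Longrightarrow>
   mrank ind (A \<union> B) + mrank ind (A \<inter> B) \<le> mrank ind A + mrank ind B"
proof -
  assume A: "A \<subseteq> S" and B: "B \<subseteq> S"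
  have AB: "A \<inter> B \<subseteq> S" "A \<union> B \<subseteq> S" using A B by auto
  obtain I where I: "I \<subseteq> A \<inter> B" "ind I" "card I = mrank ind (A \<inter> B)"
    using rank_ex[OF AB(1)] by blast
  have IU: "I \<subseteq> A \<union> B" using I by blast
  obtain J where J: "I \<subseteq> J" "J \<subseteq> A \<union> B" "ind J" "card J = mrank ind (A \<union> B)"
    using extend[OF AB(2) IU I(2)] by blast
  have fJ: "finite J" using finite_subset[OF order_trans[OF J(2) AB(2)] finS] .
  have a: "card (J \<inter> A) \<le> mrank ind A" using rank_ge[OF A, of "J \<inter> A"] ind_mono[OF J(3)] by auto
  have b: "card (J \<inter> B) \<le> mrank ind B" using rank_ge[OF B, of "J \<inter> B"] ind_mono[OF J(3)] by auto
  have "card (J \<inter> A) + card (J \<inter> B) = card ((J \<inter> A) \<union> (J \<inter> B)) + card ((J \<inter> A) \<inter> (J \<inter> B))"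
    using card_Un_Int[of "J \<inter> A" "J \<inter> B"] fJ by auto
  moreover have "(J \<inter> A) \<union> (J \<inter> B) = J" using J(2) by blast
  moreover have "card I \<le> card ((J \<inter> A) \<inter> (J \<inter> B))"
    using I J fJ by (intro card_mono) auto
  ultimately have "card J + card I \<le> card (J \<inter> A) + card (J \<inter> B)" by simp
  then show ?thesis using a b I J by linarith
qed
lemma min_dep_aux: "\<forall>X. X \<subseteq> S \<and> \<not> ind X \<and> card X = n \<longrightarrow>
   (\<exists>C\<subseteq>X. \<not> ind C \<and> (\<forall>e\<in>C. ind (C - {e})))"
proof (induction n rule: less_induct)
  case (less n)
  show ?case
  proof (intro allI impI)
    fix X assume X: "X \<subseteq> S \<and> \<not> ind X \<and> card X = n"
    show "\<exists>C\<subseteq>X. \<not> ind C \<and> (\<forall>e\<in>C. ind (C - {e}))"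
    proof (cases "\<forall>e\<in>X. ind (X - {e})")
      case True
      have "X \<subseteq> X \<and> \<not> ind X \<and> (\<forall>e\<in>X. ind (X - {e}))" using X True by simp
      then show ?thesis by (rule exI)
    next
      case False
      then obtain e where e: "e \<in> X" "\<not> ind (X - {e})" by blast
      have XS: "X \<subseteq> S" using X by blast
      have "finite X" using finite_subset[OF XS finS] .
      then have lt: "card (X - {e}) < n" using card_Diff1_less[OF \<open>finite X\<close> e(1)] X by simp
      have h: "X - {e} \<subseteq> S \<and> \<not> ind (X - {e}) \<and> card (X - {e}) = card (X - {e})"
        using XS e by blast
      obtain C where "C \<subseteq> X - {e}" "\<not> ind C" "\<forall>e\<in>C. ind (C - {e})"
        using mp[OF spec[OF less.IH[OF lt], of "X - {e}"] h] by blast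
      then show ?thesis by blast
    qed
  qed
qed

lemma min_dep: "X \<subseteq> S \<Longrightarrow> \<not> ind X \<Longrightarrow> \<exists>C\<subseteq>X. \<not> ind C \<and> (\<forall>e\<in>C. ind (C - {e}))"
  using min_dep_aux[of "card X"] by blast

lemma coloop:
  assumes X: "X \<subseteq> S" and e: "e \<in> X"
    and nc: "\<forall>C\<subseteq>X. e \<in> C \<longrightarrow> \<not> (\<not> ind C \<and> (\<forall>f\<in>C. ind (C - {f})))"
  shows "mrank ind X = mrank ind (X - {e}) + 1"
proof -
  have X': "X - {e} \<subseteq> S" using X by auto
  obtain B where B: "B \<subseteq> X - {e}" "ind B" "card B = mrank ind (X - {e})"
    using rank_ex[OF X'] by blast
  have fB: "finite B" using finite_subset[OF order_trans[OF B(1) X'] finS] .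
  have eB: "e \<notin> B" using B(1) by blast
  have eBX: "insert e B \<subseteq> X" using B(1) e by blast
  have i: "ind (insert e B)"
  proof (rule ccontr)
    assume dep: "\<not> ind (insert e B)"
    have eBS: "insert e B \<subseteq> S" using eBX X by blast
    obtain C where C: "C \<subseteq> insert e B" "\<not> ind C" "\<forall>f\<in>C. ind (C - {f})"
      using min_dep[OF eBS dep] by blast
    have "e \<in> C"
    proof (rule ccontr)
      assume "e \<notin> C"
      then have "C \<subseteq> B" using C(1) by blast
      then show False using ind_mono[OF B(2)] C(2) by blast
    qed
    moreover have "C \<subseteq> X" using C(1) eBX by blast
    ultimately show False using mp[OF spec[OF nc, of C]] C by blast
  qed
  have "card (insert e B) = card B + 1" using fB eB by simp
  then have ge: "mrank ind (X - {e}) + 1 \<le> mrank ind X"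
    using rank_ge[OF X eBX i] B(3) by linarith
  obtain B2 where B2: "B2 \<subseteq> X" "ind B2" "card B2 = mrank ind X" using rank_ex[OF X] by blast
  have fB2: "finite B2" using finite_subset[OF order_trans[OF B2(1) X] finS] .
  have s2: "B2 - {e} \<subseteq> X - {e}" using B2(1) by blast
  have i2: "ind (B2 - {e})" using ind_mono[OF B2(2)] by blast
  have "card (B2 - {e}) \<le> mrank ind (X - {e})"
    using rank_ge[OF X' s2 i2] .
  moreover have "card B2 \<le> card (B2 - {e}) + 1" using fB2
    by (cases "e \<in> B2") (auto simp: card_Diff_singleton)
  ultimately show ?thesis using ge B2(3) by linarith
qed

lemma insert_le: "X \<subseteq> S \<Longrightarrow> e \<in> S \<Longrightarrow> mrank ind (insert e X) \<le> mrank ind X + 1"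
proof -
  assume X: "X \<subseteq> S" and e: "e \<in> S"
  have X2: "insert e X \<subseteq> S" using X e by blast
  obtain B2 where B2: "B2 \<subseteq> insert e X" "ind B2" "card B2 = mrank ind (insert e X)" using rank_ex[OF X2] by blast
  have fB2: "finite B2" using finite_subset[OF order_trans[OF B2(1) X2] finS] .
  have s2: "B2 - {e} \<subseteq> X" using B2(1) by blast
  have i2: "ind (B2 - {e})" using ind_mono[OF B2(2)] by blast
  have "card (B2 - {e}) \<le> mrank ind X"
    using rank_ge[OF X s2 i2] .
  moreover have "card B2 \<le> card (B2 - {e}) + 1" using fB2
    by (cases "e \<in> B2") (auto simp: card_Diff_singleton)
  ultimately show ?thesis using B2(3) by linarith
qed

end


lemma graph_sub: "is_graph U \<Longrightarrow> X \<subseteq> U \<Longrightarrow> is_graph X"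
  unfolding is_graph_def by (meson finite_subset subsetD)

lemma complete_graph_is: "finite V \<Longrightarrow> is_graph (complete_graph V)"
proof -
  assume V: "finite V"
  have "complete_graph V \<subseteq> Pow V" unfolding complete_graph_def by blast
  moreover have "finite (Pow V)" using V by simp
  ultimately have "finite (complete_graph V)" by (rule finite_subset)
  then show ?thesis unfolding is_graph_def complete_graph_def by blast
qed

context
  fixes M :: "nat set set \<Rightarrow> nat set set \<Rightarrow> bool"
  assumes gm: "graph_matroid_family M"
begin

lemma gm_mat: "is_graph U \<Longrightarrow> mat U (M U)"
proof -
  assume U: "is_graph U"
  have "\<forall>E. is_graph E \<longrightarrow> matroid_on E (M E)" using gm unfolding graph_matroid_family_def by (rule conjunct1)
  then have "matroid_on U (M U)" using U by blast
  then show ?thesis unfolding mat_def .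
qed

lemma gm_restr: "is_graph U \<Longrightarrow> H \<subseteq> U \<Longrightarrow> M H X \<longleftrightarrow> X \<subseteq> H \<and> M U X"
proof -
  assume "is_graph U" "H \<subseteq> U"
  moreover have "\<forall>E H. is_graph E \<and> H \<subseteq> E \<longrightarrow> (\<forall>X. M H X \<longleftrightarrow> X \<subseteq> H \<and> M E X)"
    using gm unfolding graph_matroid_family_def by (rule conjunct2[OF conjunct2])
  ultimately show ?thesis by blast
qed

lemma gm_iso: "is_graph E \<Longrightarrow> inj_on f (verts E) \<Longrightarrow> X \<subseteq> E \<Longrightarrow>
    M ((`) f ` E) ((`) f ` X) \<longleftrightarrow> M E X"
proof -
  assume a: "is_graph E" "inj_on f (verts E)" "X \<subseteq> E"
  have "\<forall>E f. is_graph E \<and> inj_on f (verts E) \<longrightarrow>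
        (\<forall>X. X \<subseteq> E \<longrightarrow> (M ((`) f ` E) ((`) f ` X) \<longleftrightarrow> M E X))"
    using gm unfolding graph_matroid_family_def by (rule conjunct1[OF conjunct2])
  then show ?thesis using a by blast
qed

lemma ind_eq: "is_graph U \<Longrightarrow> X \<subseteq> U \<Longrightarrow> M U X \<longleftrightarrow> M X X"
  using gm_restr[of U X X] by blast

lemma grank_eq: "is_graph U \<Longrightarrow> X \<subseteq> U \<Longrightarrow> grank M X = mrank (M U) X"
proof -
  assume U: "is_graph U" and X: "X \<subseteq> U"
  have "{card Y |Y. Y \<subseteq> X \<and> M X Y} = {card Y |Y. Y \<subseteq> X \<and> M U Y}"
    using gm_restr[OF U X] by blast
  then show ?thesis unfolding grank_def mrank_def by simp
qed

lemma gr_mono: "is_graph U \<Longrightarrow> X \<subseteq> Y \<Longrightarrow> Y \<subseteq> U \<Longrightarrow> grank M X \<le> grank M Y"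
proof -
  assume U: "is_graph U" and a: "X \<subseteq> Y" "Y \<subseteq> U"
  have XU: "X \<subseteq> U" using a by blast
  interpret mat U "M U" using gm_mat[OF U] .
  show ?thesis using rank_mono[OF a] grank_eq[OF U XU] grank_eq[OF U a(2)] by simp
qed

lemma gr_submod: "is_graph U \<Longrightarrow> A \<subseteq> U \<Longrightarrow> B \<subseteq> U \<Longrightarrow>
   grank M (A \<union> B) + grank M (A \<inter> B) \<le> grank M A + grank M B"
proof -
  assume U: "is_graph U" and A: "A \<subseteq> U" and B: "B \<subseteq> U"
  have AB: "A \<union> B \<subseteq> U" "A \<inter> B \<subseteq> U" using A B by auto
  interpret mat U "M U" using gm_mat[OF U] .
  show ?thesis using submod[OF A B] grank_eq[OF U A] grank_eq[OF U B]
      grank_eq[OF U AB(1)] grank_eq[OF U AB(2)] by simp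
qed

lemma gr_union_le: "is_graph U \<Longrightarrow> A \<subseteq> U \<Longrightarrow> B \<subseteq> U \<Longrightarrow>
   grank M (A \<union> B) \<le> grank M A + grank M B"
proof -
  assume a: "is_graph U" "A \<subseteq> U" "B \<subseteq> U"
  show ?thesis using gr_submod[OF a] by linarith
qed

lemma gr_le_card: "is_graph X \<Longrightarrow> grank M X \<le> card X"
proof -
  assume X: "is_graph X"
  interpret mat X "M X" using gm_mat[OF X] .
  show ?thesis using rank_le_card[of X] grank_eq[OF X] by simp
qed

lemma gr_ind_iff: "is_graph X \<Longrightarrow> grank M X = card X \<longleftrightarrow> M X X"
proof -
  assume X: "is_graph X"
  interpret mat X "M X" using gm_mat[OF X] .
  have "grank M X = mrank (M X) X" using grank_eq[OF X order_refl] .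
  then show ?thesis using rank_ind[OF order_refl] ind_rank[of X] by metis
qed

lemma gr_insert_le: "is_graph U \<Longrightarrow> X \<subseteq> U \<Longrightarrow> e \<in> U \<Longrightarrow>
    grank M (insert e X) \<le> grank M X + 1"
proof -
  assume U: "is_graph U" and X: "X \<subseteq> U" and e: "e \<in> U"
  have X2: "insert e X \<subseteq> U" using X e by blast
  interpret mat U "M U" using gm_mat[OF U] .
  show ?thesis using insert_le[OF X e] grank_eq[OF U X] grank_eq[OF U X2] by simp
qed

lemma gr_closure:
  assumes U: "is_graph U" and Y: "Y \<subseteq> U" and F: "F \<subseteq> U"
    and cl: "\<forall>e\<in>F. grank M (insert e Y) = grank M Y"
  shows "grank M (Y \<union> F) = grank M Y"
proof -
  have fF: "finite F" using F U unfolding is_graph_def using finite_subset by blast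
  have "F' \<subseteq> F \<longrightarrow> grank M (Y \<union> F') = grank M Y" for F'
  proof (induction F' rule: infinite_finite_induct)
    case (infinite A)
    then show ?case using fF finite_subset by blast
  next
    case empty
    then show ?case by simp
  next
    case (insert x F')
    show ?case
    proof
      assume s: "insert x F' \<subseteq> F"
      have IH: "grank M (Y \<union> F') = grank M Y" using insert.IH s by blast
      have x: "x \<in> F" "x \<in> U" using s F by auto
      have A: "Y \<union> F' \<subseteq> U" using Y s F by blast
      have B: "insert x Y \<subseteq> U" using Y x by blast
      have sm: "grank M ((Y \<union> F') \<union> insert x Y) + grank M ((Y \<union> F') \<inter> insert x Y)
          \<le> grank M (Y \<union> F') + grank M (insert x Y)" using gr_submod[OF U A B] .
      have e1: "(Y \<union> F') \<union> insert x Y = Y \<union> insert x F'" by blast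
      have "Y \<subseteq> (Y \<union> F') \<inter> insert x Y" by blast
      then have m1: "grank M Y \<le> grank M ((Y \<union> F') \<inter> insert x Y)"
        using gr_mono[OF U] A by blast
      have m2: "grank M (Y \<union> F') \<le> grank M (Y \<union> insert x F')"
        using gr_mono[OF U, of "Y \<union> F'" "Y \<union> insert x F'"] A x by blast
      have "grank M (insert x Y) = grank M Y" using cl x by blast
      moreover have "grank M (Y \<union> insert x F') + grank M ((Y \<union> F') \<inter> insert x Y)
          \<le> grank M (Y \<union> F') + grank M (insert x Y)" using sm unfolding e1 .
      ultimately show "grank M (Y \<union> insert x F') = grank M Y" using m1 m2 IH by linarith
    qed
  qed
  then show ?thesis by blast
qed

lemma circuit_props: "is_circuit M C \<Longrightarrow> is_graph C \<and> C \<noteq> {} \<and> \<not> M C C \<and> (\<forall>e\<in>C. M (C - {e}) (C - {e}))"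
proof -
  assume c: "is_circuit M C"
  have g: "is_graph C" using c unfolding is_circuit_def by blast
  have lt: "grank M C < card C" using c unfolding is_circuit_def by blast
  have ne: "C \<noteq> {}" using lt by auto
  have d: "\<not> M C C" using gr_ind_iff[OF g] lt by simp
  have "M (C - {e}) (C - {e})" if e: "e \<in> C" for e
  proof -
    have g2: "is_graph (C - {e})" using graph_sub[OF g] by blast
    have fC: "finite C" using g unfolding is_graph_def by blast
    have "grank M (C - {e}) = card C - 1" using c e unfolding is_circuit_def by blast
    also have "\<dots> = card (C - {e})" using e fC by simp
    finally show ?thesis using gr_ind_iff[OF g2] by simp
  qed
  then show ?thesis using g ne d by blast
qed

lemma circuit_intro: "is_graph C \<Longrightarrow> \<not> M C C \<Longrightarrow> (\<forall>e\<in>C. M (C - {e}) (C - {e})) \<Longrightarrow> is_circuit M C"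
proof -
  assume g: "is_graph C" and d: "\<not> M C C" and i: "\<forall>e\<in>C. M (C - {e}) (C - {e})"
  have fC: "finite C" using g unfolding is_graph_def by blast
  have lt: "grank M C < card C" using gr_ind_iff[OF g] gr_le_card[OF g] d by linarith
  have "grank M (C - {e}) = card C - 1" if e: "e \<in> C" for e
  proof -
    have g2: "is_graph (C - {e})" using graph_sub[OF g] by blast
    have "grank M (C - {e}) = card (C - {e})" using gr_ind_iff[OF g2] i e by blast
    then show ?thesis using e fC by simp
  qed
  then show ?thesis unfolding is_circuit_def using g lt by blast
qed

lemma gr_coloop:
  assumes X: "is_graph X" and e: "e \<in> X" and nc: "\<forall>C\<subseteq>X. e \<in> C \<longrightarrow> \<not> is_circuit M C"
  shows "grank M X = grank M (X - {e}) + 1"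
proof -
  interpret mat X "M X" using gm_mat[OF X] .
  have nc2: "\<forall>C\<subseteq>X. e \<in> C \<longrightarrow> \<not> (\<not> M X C \<and> (\<forall>f\<in>C. M X (C - {f})))"
  proof (intro allI impI notI)
    fix C assume C: "C \<subseteq> X" "e \<in> C" "\<not> M X C \<and> (\<forall>f\<in>C. M X (C - {f}))"
    have gC: "is_graph C" using graph_sub[OF X C(1)] .
    have "\<not> M C C" using ind_eq[OF X C(1)] C(3) by blast
    moreover have "\<forall>f\<in>C. M (C - {f}) (C - {f})"
    proof
      fix f assume f: "f \<in> C"
      have "C - {f} \<subseteq> X" using C(1) by blast
      then show "M (C - {f}) (C - {f})" using ind_eq[OF X] C(3) f by blast
    qed
    ultimately have "is_circuit M C" using circuit_intro[OF gC] by blast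
    then show False using nc C by blast
  qed
  have X2: "X - {e} \<subseteq> X" by blast
  show ?thesis using coloop[OF order_refl e nc2] grank_eq[OF X order_refl] grank_eq[OF X X2] by simp
qed

lemma gr_circuit_exists: "is_graph X \<Longrightarrow> \<not> M X X \<Longrightarrow> \<exists>C\<subseteq>X. is_circuit M C"
proof -
  assume X: "is_graph X" and d: "\<not> M X X"
  interpret mat X "M X" using gm_mat[OF X] .
  obtain C where C: "C \<subseteq> X" "\<not> M X C" "\<forall>f\<in>C. M X (C - {f})" using min_dep[OF order_refl d] by blast
  have gC: "is_graph C" using graph_sub[OF X C(1)] .
  have "\<not> M C C" using ind_eq[OF X C(1)] C(2) by blast
  moreover have "\<forall>f\<in>C. M (C - {f}) (C - {f})"
  proof
    fix f assume f: "f \<in> C"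
    have "C - {f} \<subseteq> X" using C(1) by blast
    then show "M (C - {f}) (C - {f})" using ind_eq[OF X] C(3) f by blast
  qed
  ultimately show ?thesis using circuit_intro[OF gC] C(1) by blast
qed

lemma gr_span_circuit:
  assumes U: "is_graph U" and Y: "Y \<subseteq> U" and C: "C \<subseteq> U" and e0: "e0 \<in> C"
    and dep: "\<not> M C C" and ind: "M (C - {e0}) (C - {e0})" and sub: "C - {e0} \<subseteq> Y"
  shows "grank M (insert e0 Y) = grank M Y"
proof -
  have gC: "is_graph C" using graph_sub[OF U C] .
  have gC2: "is_graph (C - {e0})" using graph_sub[OF gC] by blast
  have fC: "finite C" using gC unfolding is_graph_def by blast
  have r1: "grank M C < card C" using gr_ind_iff[OF gC] gr_le_card[OF gC] dep by linarith
  have r2: "grank M (C - {e0}) = card C - 1" using gr_ind_iff[OF gC2] ind e0 fC by simp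
  have sm: "grank M (Y \<union> C) + grank M (Y \<inter> C) \<le> grank M Y + grank M C" using gr_submod[OF U Y C] .
  have "C - {e0} \<subseteq> Y \<inter> C" using sub by blast
  then have m1: "grank M (C - {e0}) \<le> grank M (Y \<inter> C)" using gr_mono[OF U] Y by blast
  have YC: "Y \<union> C \<subseteq> U" using Y C by blast
  have "insert e0 Y \<subseteq> Y \<union> C" using e0 by blast
  then have m2: "grank M (insert e0 Y) \<le> grank M (Y \<union> C)" using gr_mono[OF U _ YC] by blast
  have m3: "grank M Y \<le> grank M (insert e0 Y)" using gr_mono[OF U, of Y "insert e0 Y"] YC e0 by blast
  show ?thesis using sm m1 m2 m3 r1 r2 by linarith
qed

end

lemma edge_form: "card e = 2 \<Longrightarrow> v \<in> e \<Longrightarrow> \<exists>u. u \<noteq> v \<and> e = {v, u}"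
proof -
  assume c: "card e = 2" and v: "v \<in> e"
  obtain a b where ab: "e = {a, b}" "a \<noteq> b" using c card_2_iff by metis
  show ?thesis
  proof (cases "v = a")
    case True then show ?thesis using ab by (intro exI[of _ b]) simp
  next
    case False then have "v = b" using v ab by blast
    then show ?thesis using ab by (intro exI[of _ a]) auto
  qed
qed

lemma verts_finite: "is_graph E \<Longrightarrow> finite (verts E)"
proof -
  assume g: "is_graph E"
  have "finite E" using g unfolding is_graph_def by blast
  moreover have "\<forall>e\<in>E. finite e"
  proof
    fix e assume "e \<in> E"
    then have "card e = 2" using g unfolding is_graph_def by blast
    then show "finite e" by (intro card_ge_0_finite) simp
  qed
  ultimately show ?thesis unfolding verts_def by blast
qed

lemma degree_pos: "is_graph C \<Longrightarrow> v \<in> verts C \<Longrightarrow> 1 \<le> degree C v"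
proof -
  assume g: "is_graph C" and v: "v \<in> verts C"
  obtain e where e: "e \<in> C" "v \<in> e" using v unfolding verts_def by blast
  have "finite C" using g unfolding is_graph_def by blast
  then have "finite {e\<in>C. v \<in> e}" by simp
  moreover have "e \<in> {e\<in>C. v \<in> e}" using e by blast
  ultimately have "0 < card {e\<in>C. v \<in> e}" using card_gt_0_iff by blast
  then show ?thesis unfolding degree_def by simp
qed

lemma degree_le_min: "is_graph C \<Longrightarrow> v \<in> verts C \<Longrightarrow> min_degree C \<le> degree C v"
proof -
  assume g: "is_graph C" and v: "v \<in> verts C"
  have "finite (degree C ` verts C)" using verts_finite[OF g] by simp
  then show ?thesis unfolding min_degree_def using v by simp
qed

lemma min_degree_pos: "is_graph C \<Longrightarrow> C \<noteq> {} \<Longrightarrow> 1 \<le> min_degree C"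
proof -
  assume g: "is_graph C" and ne: "C \<noteq> {}"
  obtain e where e: "e \<in> C" using ne by blast
  have "card e = 2" using g e unfolding is_graph_def by blast
  then obtain u where "u \<in> e" by fastforce
  then have vne: "verts C \<noteq> {}" using e unfolding verts_def by blast
  have f: "finite (degree C ` verts C)" using verts_finite[OF g] by simp
  have "\<forall>a\<in>degree C ` verts C. 1 \<le> a" using degree_pos[OF g] by blast
  then show ?thesis unfolding min_degree_def using Min_ge_iff[OF f] vne by blast
qed

lemma min_degree_attained: "is_graph C \<Longrightarrow> C \<noteq> {} \<Longrightarrow> \<exists>w\<in>verts C. degree C w = min_degree C"
proof -
  assume g: "is_graph C" and ne: "C \<noteq> {}"
  obtain e where e: "e \<in> C" using ne by blast
  have "card e = 2" using g e unfolding is_graph_def by blast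
  then obtain u where "u \<in> e" by fastforce
  then have vne: "verts C \<noteq> {}" using e unfolding verts_def by blast
  have f: "finite (degree C ` verts C)" using verts_finite[OF g] by simp
  have "Min (degree C ` verts C) \<in> degree C ` verts C" using Min_in[OF f] vne by blast
  then show ?thesis unfolding min_degree_def by auto
qed

context
  fixes M :: "nat set set \<Rightarrow> nat set set \<Rightarrow> bool"
  assumes gm: "graph_matroid_family M"
begin

lemma circ_deg: "is_circuit M C \<Longrightarrow> v \<in> verts C \<Longrightarrow> dimensionality M + 1 \<le> degree C v"
proof -
  assume c: "is_circuit M C" and v: "v \<in> verts C"
  have cp: "is_graph C \<and> C \<noteq> {} \<and> \<not> M C C \<and> (\<forall>e\<in>C. M (C - {e}) (C - {e}))"
    using circuit_props[OF gm c] .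
  have "dimensionality M \<le> min_degree C - 1"
    unfolding dimensionality_def using c by (intro Least_le) blast
  moreover have "1 \<le> min_degree C" using min_degree_pos cp by blast
  moreover have "min_degree C \<le> degree C v" using degree_le_min cp v by blast
  ultimately show ?thesis by linarith
qed

lemma lowdeg:
  assumes cd: "\<forall>C v. is_circuit M C \<longrightarrow> v \<in> verts C \<longrightarrow> d + 1 \<le> degree C v"
    and X: "is_graph X" and Dd: "D = {e\<in>X. v \<in> e}" and cD: "card D \<le> d"
  shows "grank M X = grank M (X - D) + card D"
proof -
  have fX: "finite X" using X unfolding is_graph_def by blast
  have fD: "finite D" using fX Dd by simp
  have "D' \<subseteq> D \<longrightarrow> grank M ((X - D) \<union> D') = grank M (X - D) + card D'" for D'
  proof (induction D' rule: infinite_finite_induct)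
    case (infinite A)
    show ?case
    proof
      assume "A \<subseteq> D"
      then have "finite A" using fD by (rule finite_subset)
      then show "grank M (X - D \<union> A) = grank M (X - D) + card A" using infinite by blast
    qed
  next
    case empty
    then show ?case by simp
  next
    case (insert e D')
    show ?case
    proof
      assume s: "insert e D' \<subseteq> D"
      have s': "D' \<subseteq> D" using s by blast
      have IH: "grank M ((X - D) \<union> D') = grank M (X - D) + card D'" using mp[OF insert.IH s'] .
      define Z where "Z = (X - D) \<union> insert e D'"
      have ZX: "Z \<subseteq> X" unfolding Z_def using s unfolding Dd by blast
      have gZ: "is_graph Z" using graph_sub[OF X ZX] .
      have eZ: "e \<in> Z" using Z_def by blast
      have ve: "v \<in> e" using s unfolding Dd by blast
      have nc: "\<forall>C\<subseteq>Z. e \<in> C \<longrightarrow> \<not> is_circuit M C"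
      proof (intro allI impI notI)
        fix C assume C: "C \<subseteq> Z" "e \<in> C" "is_circuit M C"
        have vC: "v \<in> verts C" using C ve unfolding verts_def by blast
        have "{f\<in>C. v \<in> f} \<subseteq> insert e D'"
        proof
          fix f assume f: "f \<in> {f\<in>C. v \<in> f}"
          then have "f \<in> Z" "v \<in> f" using C(1) by blast+
          then show "f \<in> insert e D'" unfolding Z_def Dd by blast
        qed
        moreover have "finite (insert e D')" using insert.hyps(1) by simp
        ultimately have "card {f\<in>C. v \<in> f} \<le> card (insert e D')"
          by (simp add: card_mono)
        also have "\<dots> \<le> card D" using card_mono[OF fD s] .
        finally have "degree C v \<le> d" using cD unfolding degree_def by linarith
        moreover have "d + 1 \<le> degree C v" using cd C(3) vC by blast
        ultimately show False by linarith
      qed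
      have "grank M Z = grank M (Z - {e}) + 1" using gr_coloop[OF gm gZ eZ nc] .
      moreover have "Z - {e} = (X - D) \<union> D'" unfolding Z_def using insert.hyps(2) s by blast
      moreover have "card (insert e D') = card D' + 1" using insert.hyps by simp
      ultimately show "grank M ((X - D) \<union> insert e D') = grank M (X - D) + card (insert e D')"
        using IH Z_def by simp
    qed
  qed
  then have "grank M ((X - D) \<union> D) = grank M (X - D) + card D" by blast
  moreover have "(X - D) \<union> D = X" using Dd by blast
  ultimately show ?thesis by simp
qed

lemma lowdeg_bound:
  assumes cd: "\<forall>C v. is_circuit M C \<longrightarrow> v \<in> verts C \<longrightarrow> d + 1 \<le> degree C v"
    and X: "is_graph X"
  shows "grank M {e\<in>X. v \<notin> e} + min (card {e\<in>X. v \<in> e}) d \<le> grank M X"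
proof -
  define F where "F = {e\<in>X. v \<in> e}"
  obtain D where D: "D \<subseteq> F" "card D = min (card F) d" "finite D"
    using obtain_subset_with_card_n[of "min (card F) d" F] by auto
  define Z where "Z = {e\<in>X. v \<notin> e} \<union> D"
  have ZX: "Z \<subseteq> X" using Z_def D F_def by blast
  have gZ: "is_graph Z" using graph_sub[OF X ZX] .
  have DZ: "D = {e\<in>Z. v \<in> e}" using Z_def D F_def by blast
  have cD: "card D \<le> d" using D by simp
  have "grank M Z = grank M (Z - D) + card D" using lowdeg[OF cd gZ DZ cD] .
  moreover have "Z - D = {e\<in>X. v \<notin> e}" using Z_def D F_def by blast
  moreover have "grank M Z \<le> grank M X" using gr_mono[OF gm X ZX order_refl] .
  ultimately show ?thesis using D F_def by simp
qed

lemma star_ind: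
  assumes cd: "\<forall>C v. is_circuit M C \<longrightarrow> v \<in> verts C \<longrightarrow> d + 1 \<le> degree C v"
    and d1: "1 \<le> d" and X: "is_graph X" and st: "\<forall>e\<in>X. v \<in> e"
  shows "grank M X = card X"
proof (rule ccontr)
  assume "grank M X \<noteq> card X"
  then have "\<not> M X X" using gr_ind_iff[OF gm X] by simp
  then obtain C where C: "C \<subseteq> X" "is_circuit M C" using gr_circuit_exists[OF gm X] by blast
  have cp: "is_graph C \<and> C \<noteq> {} \<and> \<not> M C C \<and> (\<forall>e\<in>C. M (C - {e}) (C - {e}))"
    using circuit_props[OF gm C(2)] .
  obtain e where e: "e \<in> C" using cp by blast
  have eX: "e \<in> X" using C(1) e by (rule subsetD)
  have ce: "card e = 2" using X eX unfolding is_graph_def by blast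
  have ve: "v \<in> e" using st eX by blast
  obtain u where u: "u \<noteq> v" "e = {v, u}" using edge_form[OF ce ve] by blast
  have uC: "u \<in> verts C" using e u unfolding verts_def by blast
  have sub: "{f\<in>C. u \<in> f} \<subseteq> {e}"
  proof
    fix f assume f: "f \<in> {f\<in>C. u \<in> f}"
    have fX: "f \<in> X" using f C(1) by blast
    have "card f = 2" using X fX unfolding is_graph_def by blast
    moreover have "v \<in> f" using st fX by blast
    ultimately obtain z where z: "z \<noteq> v" "f = {v, z}" using edge_form[of f v] by blast
    have "u \<in> f" using f by blast
    then have "z = u" using z u(1) by blast
    then show "f \<in> {e}" using z u by simp
  qed
  have "card {f\<in>C. u \<in> f} \<le> card {e}" using card_mono[OF _ sub] by simp
  then have "degree C u \<le> 1" unfolding degree_def by simp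
  moreover have "d + 1 \<le> degree C u" using cd C(2) uC by blast
  ultimately show False using d1 by linarith
qed

end

context
  fixes M :: "nat set set \<Rightarrow> nat set set \<Rightarrow> bool"
  assumes gm: "graph_matroid_family M"
begin

lemma embed:
  assumes C0: "is_circuit M C0" and w: "w \<in> verts C0" and dw: "degree C0 w = d + 1"
    and cv: "card (verts C0) = t + 1"
    and fW: "finite W" and tW: "t \<le> card W" and vW: "v \<notin> W"
    and YW: "Y \<subseteq> W" and cY: "card Y = d" and xW: "x \<in> W" and xY: "x \<notin> Y"
  shows "grank M (insert {v,x} (complete_graph W \<union> (\<lambda>y. {v,y}) ` Y))
       = grank M (complete_graph W \<union> (\<lambda>y. {v,y}) ` Y)"
proof -
  have cp: "is_graph C0 \<and> C0 \<noteq> {} \<and> \<not> M C0 C0 \<and> (\<forall>e\<in>C0. M (C0 - {e}) (C0 - {e}))"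
    using circuit_props[OF gm C0] .
  have gC0: "is_graph C0" using cp by blast
  have fC0: "finite C0" using gC0 unfolding is_graph_def by blast
  have fV: "finite (verts C0)" using verts_finite[OF gC0] .
  have c2: "\<And>e. e \<in> C0 \<Longrightarrow> card e = 2" using gC0 unfolding is_graph_def by blast
  have eV: "\<And>e. e \<in> C0 \<Longrightarrow> e \<subseteq> verts C0" unfolding verts_def by blast
  define N where "N = {u. {w,u} \<in> C0}"
  have starN: "{e\<in>C0. w \<in> e} = (\<lambda>u. {w,u}) ` N"
  proof
    show "{e\<in>C0. w \<in> e} \<subseteq> (\<lambda>u. {w,u}) ` N"
    proof
      fix e assume e: "e \<in> {e\<in>C0. w \<in> e}"
      then have "card e = 2" "w \<in> e" "e \<in> C0" using c2 by blast+
      then obtain u where u: "u \<noteq> w" "e = {w,u}" using edge_form[of e w] by blast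
      then have "u \<in> N" unfolding N_def using \<open>e \<in> C0\<close> by blast
      then show "e \<in> (\<lambda>u. {w,u}) ` N" using u by blast
    qed
  next
    show "(\<lambda>u. {w,u}) ` N \<subseteq> {e\<in>C0. w \<in> e}" unfolding N_def by blast
  qed
  have injN: "inj_on (\<lambda>u. {w,u}) N"
  proof (rule inj_onI)
    fix a b assume "a \<in> N" "b \<in> N" "{w,a} = {w,b}"
    then show "a = b" by (metis doubleton_eq_iff)
  qed
  have cN: "card N = d + 1"
    using card_image[OF injN] starN dw unfolding degree_def by simp
  have wN: "w \<notin> N"
  proof
    assume "w \<in> N"
    then have "{w,w} \<in> C0" unfolding N_def by blast
    then have "card {w,w} = 2" using c2 by blast
    then show False by simp
  qed
  have NV: "N \<subseteq> verts C0" unfolding N_def verts_def by blast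
  have fN: "finite N" using finite_subset[OF NV fV] .
  define R where "R = verts C0 - insert w N"
  have wNV: "insert w N \<subseteq> verts C0" using w NV by blast
  have cwN: "card (insert w N) = d + 2" using wN fN cN by simp
  have cR: "card R = card (verts C0) - card (insert w N)"
    unfolding R_def using card_Diff_subset[OF _ wNV] fV finite_subset[OF wNV fV] by simp
  have dt: "d + 2 \<le> t + 1" using card_mono[OF fV wNV] cwN cv by simp
  have cR2: "card R + d + 1 = t" using cR cwN cv dt by simp
  have fR: "finite R" unfolding R_def using fV by simp
  define Y' where "Y' = insert x Y"
  have fY: "finite Y" using finite_subset[OF YW fW] .
  have cY': "card Y' = d + 1" unfolding Y'_def using xY fY cY by simp
  have Y'W: "Y' \<subseteq> W" unfolding Y'_def using YW xW by blast
  have fY': "finite Y'" unfolding Y'_def using fY by simp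
  have cWY: "card (W - Y') = card W - (d + 1)" using card_Diff_subset[OF fY' Y'W] cY' by simp
  have "card R \<le> card (W - Y')" using cWY cR2 tW by linarith
  then obtain T where T: "T \<subseteq> W - Y'" "card T = card R" "finite T"
    using obtain_subset_with_card_n[of "card R" "W - Y'"] by blast
  obtain g where g: "bij_betw g N Y'" using finite_same_card_bij[OF fN fY'] cN cY' by auto
  obtain h where h: "bij_betw h R T" using finite_same_card_bij[OF fR T(3)] T(2) by auto
  define f where "f u = (if u = w then v else if u \<in> N then g u else h u)" for u
  have fw: "f w = v" unfolding f_def by simp
  have fNg: "\<And>u. u \<in> N \<Longrightarrow> f u = g u \<and> g u \<in> Y'"
  proof -
    fix u assume u: "u \<in> N"
    then have "u \<noteq> w" using wN by blast
    then have "f u = g u" unfolding f_def using u by simp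
    moreover have "g u \<in> Y'" using g u unfolding bij_betw_def by blast
    ultimately show "f u = g u \<and> g u \<in> Y'" by blast
  qed
  have fRh: "\<And>u. u \<in> R \<Longrightarrow> f u = h u \<and> h u \<in> T"
  proof -
    fix u assume u: "u \<in> R"
    then have "u \<noteq> w" "u \<notin> N" unfolding R_def by blast+
    then have "f u = h u" unfolding f_def by simp
    moreover have "h u \<in> T" using h u unfolding bij_betw_def by blast
    ultimately show "f u = h u \<and> h u \<in> T" by blast
  qed
  have VC: "verts C0 = insert w (N \<union> R)" unfolding R_def using wNV by auto
  have TY: "T \<inter> Y' = {}" using T(1) by blast
  have TW: "T \<subseteq> W" using T(1) by blast
  have f_W: "\<And>u. u \<in> N \<union> R \<Longrightarrow> f u \<in> W"
  proof -
    fix u assume "u \<in> N \<union> R"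
    then show "f u \<in> W"
    proof
      assume "u \<in> N" then have "f u = g u" "g u \<in> Y'" using fNg by blast+
      then show ?thesis using Y'W by auto
    next
      assume "u \<in> R" then have "f u = h u" "h u \<in> T" using fRh by blast+
      then show ?thesis using TW by auto
    qed
  qed
  have f_img: "\<And>u. u \<in> verts C0 \<Longrightarrow> f u \<in> insert v W"
  proof -
    fix u assume u: "u \<in> verts C0"
    show "f u \<in> insert v W"
    proof (cases "u = w")
      case True then show ?thesis using fw by simp
    next
      case False then have "u \<in> N \<union> R" using u VC by blast
      then show ?thesis using f_W by blast
    qed
  qed
  have ginj: "inj_on g N" using g unfolding bij_betw_def by blast
  have hinj: "inj_on h R" using h unfolding bij_betw_def by blast
  have NR: "N \<inter> R = {}" unfolding R_def by blast
  have f_inj: "inj_on f (verts C0)"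
  proof (rule inj_onI)
    fix a b assume a: "a \<in> verts C0" and b: "b \<in> verts C0" and ab: "f a = f b"
    show "a = b"
    proof (cases "a = w")
      case True
      show ?thesis
      proof (rule ccontr)
        assume "a \<noteq> b"
        then have "b \<noteq> w" using True by simp
        then have "b \<in> N \<union> R" using b VC by blast
        then have "f b \<in> W" using f_W by blast
        then show False using ab True fw vW by simp
      qed
    next
      case aw: False
      then have aNR: "a \<in> N \<union> R" using a VC by blast
      then have faW: "f a \<in> W" using f_W by blast
      have bw: "b \<noteq> w"
      proof
        assume "b = w" then have "f a = v" using ab fw by simp
        then show False using faW vW by simp
      qed
      then have bNR: "b \<in> N \<union> R" using b VC by blast
      show ?thesis
      proof (cases "a \<in> N")
        case aN: True
        show ?thesis
        proof (cases "b \<in> N")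
          case True
          have "g a = g b" using ab fNg[OF aN] fNg[OF True] by simp
          then show ?thesis using inj_onD[OF ginj _ aN True] by blast
        next
          case False
          then have bR: "b \<in> R" using bNR by blast
          have "f b \<in> T" using fRh[OF bR] by simp
          moreover have "f a \<in> Y'" using fNg[OF aN] by simp
          ultimately show ?thesis using ab TY by auto
        qed
      next
        case aN: False
        then have aR: "a \<in> R" using aNR by blast
        show ?thesis
        proof (cases "b \<in> N")
          case True
          then have "f b \<in> Y'" using fNg by simp
          moreover have "f a \<in> T" using fRh[OF aR] by simp
          ultimately show ?thesis using ab TY by auto
        next
          case False
          then have "b \<in> R" using bNR by blast
          then have bR: "b \<in> R" .
          have "h a = h b" using ab fRh[OF aR] fRh[OF bR] by simp
          then show ?thesis using inj_onD[OF hinj _ aR bR] by blast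
        qed
      qed
    qed
  qed
  define U where "U = complete_graph (insert v W)"
  have gU: "is_graph U" unfolding U_def using complete_graph_is fW by simp
  define C' where "C' = (`) f ` C0"
  have edge_img: "\<And>e. e \<in> C0 \<Longrightarrow> card (f ` e) = 2 \<and> f ` e \<subseteq> insert v W"
  proof -
    fix e assume e: "e \<in> C0"
    have "inj_on f e" using inj_on_subset[OF f_inj eV[OF e]] .
    then have "card (f ` e) = card e" by (rule card_image)
    then have "card (f ` e) = 2" using c2[OF e] by simp
    moreover have "f ` e \<subseteq> insert v W" using f_img eV[OF e] by blast
    ultimately show "card (f ` e) = 2 \<and> f ` e \<subseteq> insert v W" by blast
  qed
  have C'U: "C' \<subseteq> U"
  proof
    fix a' assume "a' \<in> C'"
    then obtain a where a: "a \<in> C0" "a' = f ` a" unfolding C'_def by blast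
    then show "a' \<in> U" unfolding U_def complete_graph_def using edge_img[OF a(1)] by blast
  qed
  have gC': "is_graph C'" using graph_sub[OF gU C'U] .
  have "x \<in> g ` N" using g unfolding bij_betw_def Y'_def by blast
  then obtain n where n: "n \<in> N" "g n = x" by blast
  define e where "e = {w, n}"
  have eC0: "e \<in> C0" using n unfolding e_def N_def by blast
  have fe: "f ` e = {v, x}" unfolding e_def using fw fNg[OF n(1)] n(2) by simp
  have e0C': "{v,x} \<in> C'" unfolding C'_def using eC0 fe by (metis image_eqI)
  have dep: "\<not> M C' C'" unfolding C'_def using gm_iso[OF gm gC0 f_inj order_refl] cp by simp
  have injimg: "inj_on ((`) f) C0"
  proof (rule inj_onI)
    fix a b assume a: "a \<in> C0" and b: "b \<in> C0" and ab: "f ` a = f ` b"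
    show "a = b" using inj_on_image_eq_iff[OF f_inj eV[OF a] eV[OF b]] ab by simp
  qed
  have C'diff: "C' - {{v,x}} = (`) f ` (C0 - {e})"
  proof -
    have "(`) f ` (C0 - {e}) = (`) f ` C0 - (`) f ` {e}"
      using inj_on_image_set_diff[OF injimg] eC0 by blast
    then show ?thesis unfolding C'_def using fe by simp
  qed
  have i0: "M (C0 - {e}) (C0 - {e})" using cp eC0 by blast
  have i1: "M C0 (C0 - {e})" using ind_eq[OF gm gC0, of "C0 - {e}"] i0 by blast
  have i2: "M C' ((`) f ` (C0 - {e}))" unfolding C'_def
    using gm_iso[OF gm gC0 f_inj, of "C0 - {e}"] i1 by blast
  have sC': "C' - {{v,x}} \<subseteq> C'" by blast
  have ind: "M (C' - {{v,x}}) (C' - {{v,x}})"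
    using ind_eq[OF gm gC' sC'] i2 C'diff by simp
  define Yb where "Yb = complete_graph W \<union> (\<lambda>y. {v,y}) ` Y"
  have sub: "C' - {{v,x}} \<subseteq> Yb"
  proof
    fix a' assume a': "a' \<in> C' - {{v,x}}"
    then obtain a where a: "a \<in> C0" "a' = f ` a" unfolding C'_def by blast
    have ane: "a \<noteq> e" using a a' fe by blast
    show "a' \<in> Yb"
    proof (cases "w \<in> a")
      case True
      obtain u where u: "u \<noteq> w" "a = {w,u}" using edge_form[OF c2[OF a(1)] True] by blast
      have uN: "u \<in> N" unfolding N_def using a(1) u(2) by blast
      have un: "u \<noteq> n" using ane u(2) unfolding e_def by blast
      have gu: "g u \<in> Y'" using fNg[OF uN] by blast
      have "g u \<noteq> x" using ginj uN n un unfolding inj_on_def by metis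
      then have guY: "g u \<in> Y" using gu unfolding Y'_def by blast
      have "a' = {v, g u}" using a(2) u(2) fw fNg[OF uN] by simp
      then show ?thesis unfolding Yb_def using guY by blast
    next
      case False
      have "a \<subseteq> N \<union> R" using eV[OF a(1)] False unfolding VC by auto
      then have "f ` a \<subseteq> W" using f_W by blast
      moreover have "card (f ` a) = 2" using edge_img[OF a(1)] by blast
      ultimately show ?thesis unfolding Yb_def complete_graph_def using a(2) by blast
    qed
  qed
  have YbU: "Yb \<subseteq> U"
  proof
    fix a assume "a \<in> Yb"
    then show "a \<in> U" unfolding Yb_def
    proof
      assume "a \<in> complete_graph W"
      then show "a \<in> U" unfolding U_def complete_graph_def by blast
    next
      assume "a \<in> (\<lambda>y. {v,y}) ` Y"
      then obtain y where y: "y \<in> Y" "a = {v,y}" by blast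
      have "y \<noteq> v" using y YW vW by blast
      then have "card a = 2" using y by simp
      moreover have "a \<subseteq> insert v W" using y YW by blast
      ultimately show "a \<in> U" unfolding U_def complete_graph_def by blast
    qed
  qed
  show ?thesis using gr_span_circuit[OF gm gU YbU C'U e0C' dep ind sub] unfolding Yb_def .
qed

end

lemma kconn_mono: "k_connected q E \<Longrightarrow> q' \<le> q \<Longrightarrow> k_connected q' E"
  unfolding k_connected_def by auto

lemma nbr_card:
  assumes g: "is_graph E"
  shows "{e\<in>E. v \<in> e} = (\<lambda>u. {v,u}) ` {u. {v,u} \<in> E} \<and> card {u. {v,u} \<in> E} = degree E v"
proof -
  have c2: "\<And>e. e \<in> E \<Longrightarrow> card e = 2" using g unfolding is_graph_def by blast
  have eq: "{e\<in>E. v \<in> e} = (\<lambda>u. {v,u}) ` {u. {v,u} \<in> E}"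
  proof
    show "{e\<in>E. v \<in> e} \<subseteq> (\<lambda>u. {v,u}) ` {u. {v,u} \<in> E}"
    proof
      fix e assume e: "e \<in> {e\<in>E. v \<in> e}"
      then have "card e = 2" "v \<in> e" "e \<in> E" using c2 by blast+
      then obtain u where u: "u \<noteq> v" "e = {v,u}" using edge_form[of e v] by blast
      then show "e \<in> (\<lambda>u. {v,u}) ` {u. {v,u} \<in> E}" using \<open>e \<in> E\<close> by blast
    qed
  next
    show "(\<lambda>u. {v,u}) ` {u. {v,u} \<in> E} \<subseteq> {e\<in>E. v \<in> e}" by blast
  qed
  have inj: "inj_on (\<lambda>u. {v,u}) {u. {v,u} \<in> E}"
  proof (rule inj_onI)
    fix a b assume "a \<in> {u. {v,u} \<in> E}" "b \<in> {u. {v,u} \<in> E}" "{v,a} = {v,b}"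
    then show "a = b" by (metis doubleton_eq_iff)
  qed
  show ?thesis using eq card_image[OF inj] unfolding degree_def by simp
qed

lemma kconn_deg:
  assumes g: "is_graph E" and kc: "k_connected q E" and v: "v \<in> verts E"
  shows "q \<le> degree E v"
proof (rule ccontr)
  assume lt: "\<not> q \<le> degree E v"
  define N where "N = {u. {v,u} \<in> E}"
  have cN: "card N = degree E v" using nbr_card[OF g, of v] unfolding N_def by blast
  have NV: "N \<subseteq> verts E" unfolding N_def verts_def by blast
  have fV: "finite (verts E)" using verts_finite[OF g] .
  have cq: "card N < q" using cN lt by simp
  have con: "connected_on E (verts E - N)" using kc NV cq unfolding k_connected_def by blast
  have vN: "v \<notin> N"
  proof
    assume "v \<in> N"
    then have "{v,v} \<in> E" unfolding N_def by blast
    then have "card {v,v} = 2" using g unfolding is_graph_def by blast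
    then show False by simp
  qed
  have "card (verts E) > q" using kc unfolding k_connected_def by blast
  then have "card (verts E - N) \<ge> 2"
    using card_Diff_subset[OF finite_subset[OF NV fV] NV] cq card_mono[OF fV NV] by linarith
  then have "card (verts E - N - {v}) \<ge> 1"
    using vN v by simp
  then have "verts E - N - {v} \<noteq> {}" by (metis card.empty not_one_le_zero)
  then obtain u where u: "u \<in> verts E - N - {v}" by blast
  define Rl where "Rl = {(x, y). {x, y} \<in> E \<and> x \<in> verts E - N \<and> y \<in> verts E - N}"
  have vv: "v \<in> verts E - N" using v vN by blast
  have uu: "u \<in> verts E - N" using u by blast
  have path: "(v, u) \<in> Rl\<^sup>*"
    using con vv uu unfolding connected_on_def Rl_def by blast
  have vu: "v \<noteq> u" using u by blast
  obtain y where "(v, y) \<in> Rl"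
    using converse_rtranclE[OF path] vu by blast
  then have "(v, y) \<in> {(x, y). {x, y} \<in> E \<and> x \<in> verts E - N \<and> y \<in> verts E - N}"
    unfolding Rl_def .
  then have "{v,y} \<in> E" "y \<notin> N" by blast+
  then show False unfolding N_def by blast
qed

lemma connected_on_del:
  assumes c: "connected_on E W" and vW: "v \<notin> W"
  shows "connected_on {e\<in>E. v \<notin> e} W"
proof -
  have eq: "{(x, y). {x, y} \<in> E \<and> x \<in> W \<and> y \<in> W} = {(x, y). {x, y} \<in> {e\<in>E. v \<notin> e} \<and> x \<in> W \<and> y \<in> W}"
    using vW by auto
  show ?thesis using c unfolding connected_on_def eq .
qed

lemma kconn_del:
  assumes g: "is_graph E" and kc: "k_connected (Suc q) E" and q1: "1 \<le> q" and v: "v \<in> verts E"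
  shows "verts {e\<in>E. v \<notin> e} = verts E - {v} \<and> k_connected q {e\<in>E. v \<notin> e}"
proof -
  define E' where "E' = {e\<in>E. v \<notin> e}"
  have fV: "finite (verts E)" using verts_finite[OF g] .
  have cV: "card (verts E) > Suc q" using kc unfolding k_connected_def by blast
  have cV': "card (verts E - {v}) = card (verts E) - 1" using v fV by simp
  have vs: "verts E' = verts E - {v}"
  proof
    show "verts E' \<subseteq> verts E - {v}" unfolding E'_def verts_def by blast
  next
    show "verts E - {v} \<subseteq> verts E'"
    proof
      fix u assume u: "u \<in> verts E - {v}"
      have "card {v} < Suc q" using q1 by simp
      then have con: "connected_on E (verts E - {v})" using kc v unfolding k_connected_def by blast
      have "card (verts E - {v} - {u}) \<ge> 1" using cV cV' u q1 fV by simp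
      then have "verts E - {v} - {u} \<noteq> {}" by (metis card.empty not_one_le_zero)
      then obtain u' where u': "u' \<in> verts E - {v} - {u}" by blast
      define Rl where "Rl = {(x, y). {x, y} \<in> E \<and> x \<in> verts E - {v} \<and> y \<in> verts E - {v}}"
      have uu: "u' \<in> verts E - {v}" using u' by blast
      have path: "(u, u') \<in> Rl\<^sup>*"
        using con u uu unfolding connected_on_def Rl_def by blast
      have vu: "u \<noteq> u'" using u' by blast
      obtain y where "(u, y) \<in> Rl"
        using converse_rtranclE[OF path] vu by blast
      then have "(u, y) \<in> {(x, y). {x, y} \<in> E \<and> x \<in> verts E - {v} \<and> y \<in> verts E - {v}}"
        unfolding Rl_def .
      then have "{u,y} \<in> E" "y \<noteq> v" using u by blast+
      then have "{u,y} \<in> E'" unfolding E'_def using u by blast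
      then show "u \<in> verts E'" unfolding verts_def by blast
    qed
  qed
  have "k_connected q E'"
    unfolding k_connected_def
  proof (intro conjI allI impI)
    show "q < card (verts E')" using vs cV cV' by simp
  next
    fix X assume X: "X \<subseteq> verts E' \<and> card X < q"
    have XV: "X \<subseteq> verts E" using X vs by blast
    have fX: "finite X" using finite_subset[OF XV fV] .
    have "insert v X \<subseteq> verts E" using X vs v by blast
    moreover have "card (insert v X) < Suc q" using X fX by (simp add: card_insert_if)
    ultimately have "connected_on E (verts E - insert v X)" using kc unfolding k_connected_def by blast
    moreover have "verts E - insert v X = verts E' - X" using vs by blast
    ultimately have "connected_on E (verts E' - X)" by simp
    moreover have "v \<notin> verts E' - X" using vs by blast
    ultimately have "connected_on {e\<in>E. v \<notin> e} (verts E' - X)"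
      using connected_on_del[of E "verts E' - X" v] by blast
    then show "connected_on E' (verts E' - X)" unfolding E'_def[symmetric] .
  qed
  then show ?thesis using vs unfolding E'_def by blast
qed

lemma both_vertex:
  assumes g: "is_graph E" and con: "connected_on E (verts E)" and u: "E1 \<union> E2 = E"
    and n1: "E1 \<noteq> {}" and n2: "E2 \<noteq> {}"
  shows "\<exists>v. v \<in> verts E1 \<and> v \<in> verts E2"
proof (rule ccontr)
  assume no: "\<not> (\<exists>v. v \<in> verts E1 \<and> v \<in> verts E2)"
  obtain e1 where e1: "e1 \<in> E1" using n1 by blast
  obtain e2 where e2: "e2 \<in> E2" using n2 by blast
  have "card e1 = 2" "card e2 = 2" using g e1 e2 u unfolding is_graph_def by blast+
  then have "e1 \<noteq> {}" "e2 \<noteq> {}" by auto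
  then obtain a b where a: "a \<in> e1" and b: "b \<in> e2" by blast
  have aV: "a \<in> verts E1" using a e1 unfolding verts_def by blast
  have bV: "b \<in> verts E2" using b e2 unfolding verts_def by blast
  have aE: "a \<in> verts E" "b \<in> verts E" using aV bV u unfolding verts_def by blast+
  define R where "R = {(x, y). {x, y} \<in> E \<and> x \<in> verts E \<and> y \<in> verts E}"
  have path: "(a, b) \<in> R\<^sup>*" using con aE unfolding connected_on_def R_def by blast
  have "b \<in> verts E1" using path
  proof (induction rule: rtrancl_induct)
    case base then show ?case using aV .
  next
    case (step y z)
    have yz: "{y, z} \<in> E" using step.hyps(2) unfolding R_def by blast
    have "y \<notin> verts E2" using step.IH no by blast
    then have "{y,z} \<notin> E2" unfolding verts_def by blast
    then have "{y,z} \<in> E1" using yz u by blast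
    then show ?case unfolding verts_def by blast
  qed
  then show False using bV no by blast
qed


lemma complete_graph_insert:
  assumes vW: "v \<notin> W"
  shows "complete_graph (insert v W) = complete_graph W \<union> (\<lambda>y. {v,y}) ` W"
proof
  show "complete_graph (insert v W) \<subseteq> complete_graph W \<union> (\<lambda>y. {v,y}) ` W"
  proof
    fix e assume e: "e \<in> complete_graph (insert v W)"
    then have es: "e \<subseteq> insert v W" and c: "card e = 2" unfolding complete_graph_def by blast+
    show "e \<in> complete_graph W \<union> (\<lambda>y. {v,y}) ` W"
    proof (cases "v \<in> e")
      case True
      obtain u where u: "u \<noteq> v" "e = {v,u}" using edge_form[OF c True] by blast
      then have "u \<in> W" using es by blast
      then show ?thesis using u by blast
    next
      case False
      then have "e \<subseteq> W" using es by blast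
      then show ?thesis unfolding complete_graph_def using c by blast
    qed
  qed
next
  show "complete_graph W \<union> (\<lambda>y. {v,y}) ` W \<subseteq> complete_graph (insert v W)"
  proof
    fix e assume "e \<in> complete_graph W \<union> (\<lambda>y. {v,y}) ` W"
    then show "e \<in> complete_graph (insert v W)"
    proof
      assume "e \<in> complete_graph W"
      then show ?thesis unfolding complete_graph_def by blast
    next
      assume "e \<in> (\<lambda>y. {v,y}) ` W"
      then obtain y where y: "y \<in> W" "e = {v,y}" by blast
      have "y \<noteq> v" using y vW by blast
      then have "card e = 2" using y by simp
      then show ?thesis unfolding complete_graph_def using y by blast
    qed
  qed
qed

lemma deg_le_verts: "is_graph C \<Longrightarrow> w \<in> verts C \<Longrightarrow> degree C w + 1 \<le> card (verts C)"
proof -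
  assume g: "is_graph C" and w: "w \<in> verts C"
  have fV: "finite (verts C)" using verts_finite[OF g] .
  have "{e\<in>C. w \<in> e} \<subseteq> (\<lambda>u. {w,u}) ` (verts C - {w})"
  proof
    fix e assume e: "e \<in> {e\<in>C. w \<in> e}"
    then have "card e = 2" "w \<in> e" using g unfolding is_graph_def by blast+
    then obtain u where u: "u \<noteq> w" "e = {w,u}" using edge_form[of e w] by blast
    then have "u \<in> verts C - {w}" using e unfolding verts_def by blast
    then show "e \<in> (\<lambda>u. {w,u}) ` (verts C - {w})" using u by blast
  qed
  then have "degree C w \<le> card ((\<lambda>u. {w,u}) ` (verts C - {w}))"
    unfolding degree_def using fV by (simp add: card_mono)
  also have "\<dots> \<le> card (verts C - {w})" by (rule card_image_le) (simp add: fV)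
  also have "\<dots> = card (verts C) - 1" using w fV by simp
  finally have "degree C w \<le> card (verts C) - 1" .
  moreover have "verts C \<noteq> {}" using w by blast
  then have "card (verts C) \<ge> 1" using fV by (simp add: Suc_le_eq card_gt_0_iff)
  ultimately show ?thesis by linarith
qed

context
  fixes M :: "nat set set \<Rightarrow> nat set set \<Rightarrow> bool"
  assumes gm: "graph_matroid_family M"
begin

lemma vertex_add:
  assumes C0: "is_circuit M C0" and w: "w \<in> verts C0" and dw: "degree C0 w = d + 1"
    and cv: "card (verts C0) = t + 1"
    and fW: "finite W" and tW: "t \<le> card W" and vW: "v \<notin> W"
    and G'W: "G' \<subseteq> complete_graph W" and rig: "grank M G' = grank M (complete_graph W)"
    and FW: "F \<subseteq> (\<lambda>y. {v,y}) ` W" and dF: "d \<le> card F"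
  shows "grank M (G' \<union> F) \<le> grank M G' + d"
proof -
  define YF where "YF = {y\<in>W. {v,y} \<in> F}"
  have FYF: "F = (\<lambda>y. {v,y}) ` YF" unfolding YF_def using FW by blast
  have inj: "inj_on (\<lambda>y. {v,y}) YF"
  proof (rule inj_onI)
    fix a b assume "a \<in> YF" "b \<in> YF" "{v,a} = {v,b}"
    then show "a = b" by (metis doubleton_eq_iff)
  qed
  have cYF: "card YF = card F" using card_image[OF inj] FYF by simp
  obtain Y where Y: "Y \<subseteq> YF" "card Y = d" "finite Y"
    using obtain_subset_with_card_n[of d YF] cYF dF by metis
  have YW: "Y \<subseteq> W" using Y(1) unfolding YF_def by blast
  define Yb where "Yb = complete_graph W \<union> (\<lambda>y. {v,y}) ` Y"
  define U where "U = complete_graph (insert v W)"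
  have UU: "U = complete_graph W \<union> (\<lambda>y. {v,y}) ` W" unfolding U_def using complete_graph_insert[OF vW] .
  have gU: "is_graph U" unfolding U_def using complete_graph_is fW by simp
  have YbU: "Yb \<subseteq> U" unfolding Yb_def UU using YW by blast
  have FU: "F \<subseteq> U" unfolding UU using FW by blast
  have KU: "complete_graph W \<subseteq> U" unfolding UU by blast
  have cl: "\<forall>e\<in>F. grank M (insert e Yb) = grank M Yb"
  proof
    fix e assume e: "e \<in> F"
    then obtain x where x: "x \<in> YF" "e = {v,x}" using FYF by blast
    have xW: "x \<in> W" using x unfolding YF_def by blast
    show "grank M (insert e Yb) = grank M Yb"
    proof (cases "x \<in> Y")
      case True
      then have "e \<in> Yb" unfolding Yb_def using x by blast
      then show ?thesis by (simp add: insert_absorb)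
    next
      case False
      show ?thesis unfolding x(2) Yb_def
        using embed[OF gm C0 w dw cv fW tW vW YW Y(2) xW False] .
    qed
  qed
  have e1: "grank M (Yb \<union> F) = grank M Yb" using gr_closure[OF gm gU YbU FU cl] .
  have YbFU: "Yb \<union> F \<subseteq> U" using YbU FU by blast
  have "G' \<union> F \<subseteq> Yb \<union> F" using G'W unfolding Yb_def by blast
  then have m1: "grank M (G' \<union> F) \<le> grank M (Yb \<union> F)" using gr_mono[OF gm gU _ YbFU] by blast
  have imU: "(\<lambda>y. {v,y}) ` Y \<subseteq> U" unfolding UU using YW by blast
  have m2: "grank M Yb \<le> grank M (complete_graph W) + grank M ((\<lambda>y. {v,y}) ` Y)"
    unfolding Yb_def using gr_union_le[OF gm gU KU imU] .
  have gim: "is_graph ((\<lambda>y. {v,y}) ` Y)" using graph_sub[OF gU imU] .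
  have "grank M ((\<lambda>y. {v,y}) ` Y) \<le> card ((\<lambda>y. {v,y}) ` Y)" using gr_le_card[OF gm gim] .
  also have "\<dots> \<le> card Y" using card_image_le[OF Y(3)] .
  finally have m3: "grank M ((\<lambda>y. {v,y}) ` Y) \<le> d" using Y(2) by simp
  show ?thesis using m1 e1 m2 m3 rig by linarith
qed

lemma dim_pos:
  assumes C0: "is_circuit M C0" and w: "w \<in> verts C0" and dw: "degree C0 w = d + 1"
    and cv: "card (verts C0) = t + 1" and ub: "unbounded_family M"
  shows "1 \<le> d"
proof (rule ccontr)
  assume "\<not> 1 \<le> d"
  then have d0: "d = 0" by simp
  define B where "B = grank M (complete_graph {0..<t})"
  have step: "grank M (complete_graph {0..<t+n}) \<le> B" for n
  proof (induction n)
    case 0 then show ?case unfolding B_def by simp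
  next
    case (Suc n)
    define W where "W = {0..<t+n}"
    have vW: "t + n \<notin> W" unfolding W_def by simp
    have ins: "{0..<t + Suc n} = insert (t+n) W" unfolding W_def by auto
    have eq: "complete_graph {0..<t + Suc n} = complete_graph W \<union> (\<lambda>y. {t+n,y}) ` W"
      unfolding ins using complete_graph_insert[OF vW] .
    have "grank M (complete_graph W \<union> (\<lambda>y. {t+n,y}) ` W) \<le> grank M (complete_graph W) + d"
      using vertex_add[OF C0 w dw cv _ _ vW order_refl refl order_refl] unfolding W_def d0 by simp
    then show ?case using Suc.IH eq d0 unfolding W_def by simp
  qed
  have all: "grank M (complete_graph {0..<n}) \<le> B" for n
  proof (cases "t \<le> n")
    case True
    then have e: "t + (n - t) = n" by simp
    show ?thesis using step[of "n - t"] unfolding e .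
  next
    case False
    have g: "is_graph (complete_graph {0..<t})" using complete_graph_is by simp
    have "{0..<n} \<subseteq> {0..<t}" using False by simp
    then have "complete_graph {0..<n} \<subseteq> complete_graph {0..<t}"
      unfolding complete_graph_def by blast
    then show ?thesis unfolding B_def using gr_mono[OF gm g] by blast
  qed
  obtain n where "grank M (complete_graph {0..<n}) > B" using ub unfolding unbounded_family_def by blast
  then show False using all[of n] by simp
qed

end

lemma arith_main:
  fixes R r' x y r1 r2 a1 a2 d k m :: nat
  assumes IH: "r' + min k (min x y) \<le> x + y"
    and h1: "x + min a1 d \<le> r1" and h2: "y + min a2 d \<le> r2"
    and h3: "R \<le> r' + d" and h4: "a1 \<le> r1" and h5: "a2 \<le> r2"
    and h6: "x \<le> r'" and h7: "y \<le> r'"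
    and a1: "1 \<le> a1" and a2: "1 \<le> a2" and s: "m + Suc k \<le> a1 + a2"
    and dm: "d + 1 \<le> m" and d1: "1 \<le> d"
  shows "R + min (Suc k) (min r1 r2) \<le> r1 + r2"
proof -
  have mm: "d + 1 \<le> min a1 d + min a2 d"
  proof (cases "d \<le> a1")
    case True
    then show ?thesis using a2 d1 by (cases "d \<le> a2") (simp_all add: min_def)
  next
    case False
    then have "min a1 d = a1" by simp
    moreover have "d + 1 \<le> a1 + min a2 d" using False s dm a1 by (cases "d \<le> a2") (simp_all add: min_def)
    ultimately show ?thesis by simp
  qed
  consider (A) "k \<le> x \<and> k \<le> y" | (B) "x < k \<and> x \<le> y" | (C) "y < k \<and> y < x" by linarith
  then show ?thesis
  proof cases
    case A
    then have "min k (min x y) = k" by simp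
    then have "r' + k \<le> x + y" using IH by simp
    then have "R + Suc k \<le> r1 + r2" using h1 h2 h3 mm by linarith
    moreover have "min (Suc k) (min r1 r2) \<le> Suc k" by simp
    ultimately show ?thesis by linarith
  next
    case B
    then have "min k (min x y) = x" by (simp add: min_def)
    then have ry: "r' \<le> y" using IH by simp
    show ?thesis
    proof (cases "d \<le> a2")
      case True
      then have "min a2 d = d" by simp
      then have "R \<le> r2" using h2 h3 ry by linarith
      moreover have "min (Suc k) (min r1 r2) \<le> r1" by simp
      ultimately show ?thesis by linarith
    next
      case False
      then have "min a2 d = a2" by simp
      then have "y + a2 \<le> r2" using h2 by simp
      then have "R + Suc k \<le> r1 + r2" using h3 h4 ry s dm by linarith
      moreover have "min (Suc k) (min r1 r2) \<le> Suc k" by simp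
      ultimately show ?thesis by linarith
    qed
  next
    case C
    then have "min k (min x y) = y" by (simp add: min_def)
    then have rx: "r' \<le> x" using IH by simp
    show ?thesis
    proof (cases "d \<le> a1")
      case True
      then have "min a1 d = d" by simp
      then have "R \<le> r1" using h1 h3 rx by linarith
      moreover have "min (Suc k) (min r1 r2) \<le> r2" by simp
      ultimately show ?thesis by linarith
    next
      case False
      then have "min a1 d = a1" by simp
      then have "x + a1 \<le> r1" using h1 by simp
      then have "R + Suc k \<le> r1 + r2" using h3 h5 rx s dm by linarith
      moreover have "min (Suc k) (min r1 r2) \<le> Suc k" by simp
      ultimately show ?thesis by linarith
    qed
  qed
qed


lemma main_ind:
  fixes M :: "nat set set \<Rightarrow> nat set set \<Rightarrow> bool"
  assumes gm: "graph_matroid_family M" and ly: "lovasz_yemini M c" and d1: "1 \<le> d"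
    and cd: "\<forall>C v. is_circuit M C \<longrightarrow> v \<in> verts C \<longrightarrow> d + 1 \<le> degree C v"
    and vadd: "\<forall>W v G' F. finite W \<and> t \<le> card W \<and> v \<notin> W \<and> G' \<subseteq> complete_graph W \<and>
       grank M G' = grank M (complete_graph W) \<and> F \<subseteq> (\<lambda>y. {v,y}) ` W \<and> d \<le> card F \<longrightarrow>
       grank M (G' \<union> F) \<le> grank M G' + d"
    and tm: "t \<le> m" and cm: "c \<le> m" and dt: "d + 1 \<le> t"
  shows "\<forall>E E1 E2. is_graph E \<and> k_connected (m + k) E \<and> E1 \<union> E2 = E \<and> E1 \<inter> E2 = {} \<longrightarrow>
     grank M E + min k (min (grank M E1) (grank M E2)) \<le> grank M E1 + grank M E2"
proof (induction k)
  case 0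
  show ?case
  proof (intro allI impI)
    fix E E1 E2 assume a: "is_graph E \<and> k_connected (m + 0) E \<and> E1 \<union> E2 = E \<and> E1 \<inter> E2 = {}"
    have g: "is_graph E" using a by blast
    have s1: "E1 \<subseteq> E" and s2: "E2 \<subseteq> E" using a by blast+
    have "grank M (E1 \<union> E2) \<le> grank M E1 + grank M E2" using gr_union_le[OF gm g s1 s2] .
    then show "grank M E + min 0 (min (grank M E1) (grank M E2)) \<le> grank M E1 + grank M E2"
      using a by simp
  qed
next
  case (Suc k)
  show ?case
  proof (intro allI impI)
    fix E E1 E2 assume a: "is_graph E \<and> k_connected (m + Suc k) E \<and> E1 \<union> E2 = E \<and> E1 \<inter> E2 = {}"
    have g: "is_graph E" and kc: "k_connected (m + Suc k) E" and u: "E1 \<union> E2 = E"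
      and dj: "E1 \<inter> E2 = {}" using a by blast+
    have s1: "E1 \<subseteq> E" and s2: "E2 \<subseteq> E" using u by blast+
    have z: "grank M {} = 0" using gr_le_card[OF gm, of "{}"] by (simp add: is_graph_def)
    show "grank M E + min (Suc k) (min (grank M E1) (grank M E2)) \<le> grank M E1 + grank M E2"
    proof (cases "E1 = {} \<or> E2 = {}")
      case True
      then show ?thesis
      proof
        assume "E1 = {}"
        then have "E2 = E" using u by simp
        then show ?thesis using z \<open>E1 = {}\<close> by simp
      next
        assume "E2 = {}"
        then have "E1 = E" using u by simp
        then show ?thesis using z \<open>E2 = {}\<close> by simp
      qed
    next
      case False
      then have n1: "E1 \<noteq> {}" and n2: "E2 \<noteq> {}" by blast+
      define V where "V = verts E"
      have fV: "finite V" unfolding V_def using verts_finite[OF g] .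
      have cV: "m + Suc k < card V" using kc unfolding k_connected_def V_def by blast
      have "card ({} :: nat set) < m + Suc k" by simp
      then have con: "connected_on E V" using kc unfolding k_connected_def V_def by force
      obtain v where v1: "v \<in> verts E1" and v2: "v \<in> verts E2"
        using both_vertex[OF g con[unfolded V_def] u n1 n2] by blast
      have vV: "v \<in> V" using v1 s1 unfolding V_def verts_def by blast
      define G' where "G' = {e\<in>E. v \<notin> e}"
      define E1' where "E1' = {e\<in>E1. v \<notin> e}"
      define E2' where "E2' = {e\<in>E2. v \<notin> e}"
      define F where "F = {e\<in>E. v \<in> e}"
      define F1 where "F1 = {e\<in>E1. v \<in> e}"
      define F2 where "F2 = {e\<in>E2. v \<in> e}"
      have m2: "2 \<le> m" using tm dt d1 by linarith
      have kc': "k_connected (Suc (m + k)) E" using kc by simp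
      have m1: "1 \<le> m + k" using m2 by simp
      have kd: "verts G' = V - {v} \<and> k_connected (m + k) G'"
        using kconn_del[OF g kc' m1 vV[unfolded V_def]] unfolding G'_def V_def .
      have G'E: "G' \<subseteq> E" unfolding G'_def by blast
      have gG': "is_graph G'" using graph_sub[OF g G'E] .
      have u': "E1' \<union> E2' = G'" unfolding E1'_def E2'_def G'_def using u by blast
      have dj': "E1' \<inter> E2' = {}" unfolding E1'_def E2'_def using dj by blast
      have IH: "grank M G' + min k (min (grank M E1') (grank M E2')) \<le> grank M E1' + grank M E2'"
        using Suc.IH gG' kd u' dj' by blast
      have "k_connected c G'" using kconn_mono kd cm by fastforce
      then have "rigid M G'" using ly gG' unfolding lovasz_yemini_def by blast
      then have rig: "grank M G' = grank M (complete_graph (V - {v}))"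
        unfolding rigid_def using kd by simp
      define W where "W = V - {v}"
      have fW: "finite W" unfolding W_def using fV by simp
      have cW: "card W = card V - 1" unfolding W_def using fV vV by simp
      have tW: "t \<le> card W" using cW cV tm by linarith
      have vW: "v \<notin> W" unfolding W_def by blast
      have c2: "\<And>e. e \<in> E \<Longrightarrow> card e = 2" using g unfolding is_graph_def by blast
      have eV: "\<And>e. e \<in> E \<Longrightarrow> e \<subseteq> V" unfolding V_def verts_def by blast
      have G'W: "G' \<subseteq> complete_graph W"
      proof
        fix e assume e: "e \<in> G'"
        then have "e \<in> E" "v \<notin> e" unfolding G'_def by blast+
        then show "e \<in> complete_graph W" unfolding complete_graph_def W_def using c2 eV by blast
      qed
      have FW: "F \<subseteq> (\<lambda>y. {v,y}) ` W"
      proof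
        fix e assume e: "e \<in> F"
        then have eE: "e \<in> E" and ve: "v \<in> e" unfolding F_def by blast+
        obtain y where y: "y \<noteq> v" "e = {v,y}" using edge_form[OF c2[OF eE] ve] by blast
        then have "y \<in> W" unfolding W_def using eV[OF eE] by blast
        then show "e \<in> (\<lambda>y. {v,y}) ` W" using y by blast
      qed
      have degF: "card F = degree E v" unfolding F_def degree_def ..
      have dg: "m + Suc k \<le> degree E v" using kconn_deg[OF g kc vV[unfolded V_def]] .
      have dF: "d \<le> card F" using degF dg dt tm by linarith
      have EGF: "E = G' \<union> F" unfolding G'_def F_def by blast
      have h3: "grank M E \<le> grank M G' + d"
        using mp[OF spec[OF spec[OF spec[OF spec[OF vadd, of W], of v], of G'], of F]]
          fW tW vW G'W rig[folded W_def] FW dF EGF by blast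
      have gE1: "is_graph E1" using graph_sub[OF g s1] .
      have gE2: "is_graph E2" using graph_sub[OF g s2] .
      have h1: "grank M E1' + min (card F1) d \<le> grank M E1"
        using lowdeg_bound[OF gm cd gE1, of v] unfolding E1'_def F1_def .
      have h2: "grank M E2' + min (card F2) d \<le> grank M E2"
        using lowdeg_bound[OF gm cd gE2, of v] unfolding E2'_def F2_def .
      have F1E1: "F1 \<subseteq> E1" unfolding F1_def by blast
      have F2E2: "F2 \<subseteq> E2" unfolding F2_def by blast
      have gF1: "is_graph F1" using graph_sub[OF gE1 F1E1] .
      have gF2: "is_graph F2" using graph_sub[OF gE2 F2E2] .
      have st1: "\<forall>e\<in>F1. v \<in> e" unfolding F1_def by blast
      have st2: "\<forall>e\<in>F2. v \<in> e" unfolding F2_def by blast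
      have h4: "card F1 \<le> grank M E1"
        using star_ind[OF gm cd d1 gF1 st1] gr_mono[OF gm g F1E1 s1] by simp
      have h5: "card F2 \<le> grank M E2"
        using star_ind[OF gm cd d1 gF2 st2] gr_mono[OF gm g F2E2 s2] by simp
      have E1'G': "E1' \<subseteq> G'" and E2'G': "E2' \<subseteq> G'" using u' by blast+
      have h6: "grank M E1' \<le> grank M G'" using gr_mono[OF gm g E1'G' G'E] .
      have h7: "grank M E2' \<le> grank M G'" using gr_mono[OF gm g E2'G' G'E] .
      have fE: "finite E" using g unfolding is_graph_def by blast
      have fF1: "finite F1" unfolding F1_def using finite_subset[OF s1 fE] by simp
      have fF2: "finite F2" unfolding F2_def using finite_subset[OF s2 fE] by simp
      obtain e1 where "e1 \<in> E1" "v \<in> e1" using v1 unfolding verts_def by blast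
      then have "e1 \<in> F1" unfolding F1_def by blast
      then have a1: "1 \<le> card F1" using fF1 by (metis One_nat_def Suc_leI card_gt_0_iff empty_iff)
      obtain e2 where "e2 \<in> E2" "v \<in> e2" using v2 unfolding verts_def by blast
      then have "e2 \<in> F2" unfolding F2_def by blast
      then have a2: "1 \<le> card F2" using fF2 by (metis One_nat_def Suc_leI card_gt_0_iff empty_iff)
      have "F = F1 \<union> F2" unfolding F_def F1_def F2_def using u by blast
      moreover have "F1 \<inter> F2 = {}" unfolding F1_def F2_def using dj by blast
      ultimately have "card F = card F1 + card F2" using card_Un_disjoint[OF fF1 fF2] by simp
      then have s: "m + Suc k \<le> card F1 + card F2" using degF dg by simp
      have dm: "d + 1 \<le> m" using dt tm by linarith
      show ?thesis using arith_main[OF IH h1 h2 h3 h4 h5 h6 h7 a1 a2 s dm d1] .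
    qed
  qed
qed


theorem proposition3p7:
  fixes M :: "nat set set \<Rightarrow> nat set set \<Rightarrow> bool"
    and E :: "nat set set" and c k :: nat
  assumes "is_graph E"
    and "graph_matroid_family M"
    and "nontrivial_family M"
    and "unbounded_family M"
    and "lovasz_yemini M c"
    and "0 < k"
    and "k_connected (max (threshold M) c + k) E"
  shows "vertically_connected (M E) E (k + 1)"
proof -
  note g = assms(1) and gm = assms(2)
  obtain E0 where E0: "is_graph E0" "grank M E0 < card E0"
    using assms(3) unfolding nontrivial_family_def by blast
  have "\<not> M E0 E0" using gr_ind_iff[OF gm E0(1)] E0(2) by simp
  then obtain C1 where C1: "is_circuit M C1" using gr_circuit_exists[OF gm E0(1)] by blast
  define d where "d = dimensionality M"
  have ex1: "\<exists>dd. \<exists>C. is_circuit M C \<and> dd = min_degree C - 1" using C1 by blast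
  have "\<exists>C. is_circuit M C \<and> d = min_degree C - 1"
    unfolding d_def dimensionality_def by (rule LeastI_ex[OF ex1])
  then obtain C2 where C2: "is_circuit M C2" "d = min_degree C2 - 1" by blast
  have cp2: "is_graph C2 \<and> C2 \<noteq> {} \<and> \<not> M C2 C2 \<and> (\<forall>e\<in>C2. M (C2 - {e}) (C2 - {e}))"
    using circuit_props[OF gm C2(1)] .
  have "1 \<le> min_degree C2" using min_degree_pos cp2 by blast
  then have md2: "min_degree C2 = d + 1" using C2(2) by simp
  define t where "t = threshold M"
  have ex2: "\<exists>tt. \<exists>C. is_circuit M C \<and> min_degree C = dimensionality M + 1 \<and> tt = card (verts C) - 1"
    using C2(1) md2 unfolding d_def by blast
  have "\<exists>C. is_circuit M C \<and> min_degree C = dimensionality M + 1 \<and> t = card (verts C) - 1"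
    unfolding t_def threshold_def by (rule LeastI_ex[OF ex2])
  then obtain C0 where C0: "is_circuit M C0" "min_degree C0 = d + 1" "t = card (verts C0) - 1"
    unfolding d_def by blast
  have cp0: "is_graph C0 \<and> C0 \<noteq> {} \<and> \<not> M C0 C0 \<and> (\<forall>e\<in>C0. M (C0 - {e}) (C0 - {e}))"
    using circuit_props[OF gm C0(1)] .
  have gC0: "is_graph C0" using cp0 by blast
  obtain w where w: "w \<in> verts C0" "degree C0 w = min_degree C0"
    using min_degree_attained[of C0] cp0 by blast
  have dw: "degree C0 w = d + 1" using w(2) C0(2) by simp
  have dv: "degree C0 w + 1 \<le> card (verts C0)" using deg_le_verts[OF gC0 w(1)] .
  have cv: "card (verts C0) = t + 1" using C0(3) dv by simp
  have dt: "d + 1 \<le> t" using dv dw cv by simp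
  have cd: "\<forall>C v. is_circuit M C \<longrightarrow> v \<in> verts C \<longrightarrow> d + 1 \<le> degree C v"
    using circ_deg[OF gm] unfolding d_def by blast
  have d1: "1 \<le> d" using dim_pos[OF gm C0(1) w(1) dw cv assms(4)] .
  have vadd: "\<forall>W v G' F. finite W \<and> t \<le> card W \<and> v \<notin> W \<and> G' \<subseteq> complete_graph W \<and>
       grank M G' = grank M (complete_graph W) \<and> F \<subseteq> (\<lambda>y. {v,y}) ` W \<and> d \<le> card F \<longrightarrow>
       grank M (G' \<union> F) \<le> grank M G' + d"
    using vertex_add[OF gm C0(1) w(1) dw cv] by blast
  define m where "m = max t c"
  have tm: "t \<le> m" and cm: "c \<le> m" unfolding m_def by simp_all
  have main: "\<forall>E E1 E2. is_graph E \<and> k_connected (m + k) E \<and> E1 \<union> E2 = E \<and> E1 \<inter> E2 = {} \<longrightarrow>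
     grank M E + min k (min (grank M E1) (grank M E2)) \<le> grank M E1 + grank M E2"
    using main_ind[OF gm assms(5) d1 cd vadd tm cm dt] .
  have kc: "k_connected (m + k) E" using assms(7) unfolding m_def t_def .
  have req: "\<And>X. X \<subseteq> E \<Longrightarrow> mrank (M E) X = grank M X"
    using grank_eq[OF gm g] by simp
  have cV: "m + k < card (verts E)" using kc unfolding k_connected_def by blast
  then have "verts E \<noteq> {}" by auto
  then obtain v where v: "v \<in> verts E" by blast
  define F where "F = {e\<in>E. v \<in> e}"
  have FE: "F \<subseteq> E" unfolding F_def by blast
  have gF: "is_graph F" using graph_sub[OF g FE] .
  have "grank M F = card F" using star_ind[OF gm cd d1 gF] unfolding F_def by blast
  moreover have "card F = degree E v" unfolding F_def degree_def ..
  moreover have "m + k \<le> degree E v" using kconn_deg[OF g kc v] .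
  moreover have "grank M F \<le> grank M E" using gr_mono[OF gm g FE order_refl] .
  moreover have "2 \<le> m" using tm dt d1 by linarith
  ultimately have rk: "k + 1 \<le> grank M E" by linarith
  show ?thesis
    unfolding vertically_connected_def
  proof (intro conjI allI impI)
    show "k + 1 \<le> mrank (M E) E" using rk req[of E] by simp
  next
    fix k' E1 E2 assume k': "0 < k' \<and> k' < k + 1"
    show "\<not> vertical_separation (M E) E k' E1 E2"
    proof
      assume vs: "vertical_separation (M E) E k' E1 E2"
      then have u: "E1 \<union> E2 = E" and dj: "E1 \<inter> E2 = {}"
        unfolding vertical_separation_def by blast+
      have s1: "E1 \<subseteq> E" and s2: "E2 \<subseteq> E" using u by blast+
      have r: "k' \<le> grank M E1" "k' \<le> grank M E2"
        "grank M E1 + grank M E2 \<le> grank M E + k' - 1"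
        using vs unfolding vertical_separation_def using req[OF s1] req[OF s2] req[of E] by simp_all
      have "grank M E + min k (min (grank M E1) (grank M E2)) \<le> grank M E1 + grank M E2"
        using main g kc u dj by blast
      moreover have "k' \<le> min k (min (grank M E1) (grank M E2))" using k' r by simp
      ultimately show False using r k' by linarith
    qed
  qed
qed


end
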